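(* Let $G$ be an $n$-vertex near triangulation that is either $K_4$ (embedded with a triangle as outer cycle and one interior vertex) or $G_6^3$, let $C$ be its outer cycle, and let $v$ be a vertex of $C$ with $d(v)=3$ that has a neighbor in $V(G)\setminus V(C)$. Then there exists an orientation $D$ of $G$ with $\mathrm{diam}(D)=\overrightarrow{\mathrm{diam}}(G)=\frac{n}{2}+1$ such that $\max\{d_D(u,v),d_D(v,u)\}\le \frac{n}{2}$ for all $u\in V(G)$.
   Context: A near triangulation is a plane graph in which every face except possibly the outer face is bounded by a triangle; its outer cycle bounds the outer face. $G_6^3$ is the plane graph on vertices $a,b,c,x,y,z$ with edges $ab,bc,ca,xa,xb,xc,by,cy,yz,bz$, embedded with outer cycle $abzyca$, interior vertex $x$, and inner faces $abx,bcx,cax,bcy,byz$. For a directed graph $D$, $d_D(u,v)$ is the length of a shortest directed path from $u$ to $v$ and $\mathrm{diam}(D)=\max_{u,v}d_D(u,v)$; $\overrightarrow{\mathrm{diam}}(G)$ is the minimum of $\mathrm{diam}(D)$ over strongly connected orientations $D$ of $G$. *)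

theory Defs
  imports Complex_Main
begin

definition neighbors :: "'a set set \<Rightarrow> 'a \<Rightarrow> 'a set" where
  "neighbors E v = {w. {v, w} \<in> E}"

definition degree :: "'a set set \<Rightarrow> 'a \<Rightarrow> nat" where
  "degree E v = card (neighbors E v)"

definition is_orientation :: "'a set set \<Rightarrow> ('a \<times> 'a) set \<Rightarrow> bool" where
  "is_orientation E D \<longleftrightarrow>
     (\<forall>(u, w) \<in> D. {u, w} \<in> E) \<and>
     (\<forall>u w. {u, w} \<in> E \<longrightarrow> ((u, w) \<in> D \<or> (w, u) \<in> D) \<and> \<not> ((u, w) \<in> D \<and> (w, u) \<in> D))"

definition strongly_connected :: "'a set \<Rightarrow> ('a \<times> 'a) set \<Rightarrow> bool" where
  "strongly_connected V D \<longleftrightarrow> (\<forall>u\<in>V. \<forall>w\<in>V. (u, w) \<in> D\<^sup>*)"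

definition ddist :: "('a \<times> 'a) set \<Rightarrow> 'a \<Rightarrow> 'a \<Rightarrow> nat" where
  "ddist D u w = (LEAST k. (u, w) \<in> D ^^ k)"

definition ddiam :: "'a set \<Rightarrow> ('a \<times> 'a) set \<Rightarrow> nat" where
  "ddiam V D = Max {ddist D u w | u w. u \<in> V \<and> w \<in> V}"

definition odiam :: "'a set \<Rightarrow> 'a set set \<Rightarrow> nat" where
  "odiam V E = Min {ddiam V D | D. is_orientation E D \<and> strongly_connected V D}"

datatype vtx = A | B | C | X | Y | Z

definition K4_V :: "vtx set" where "K4_V = {A, B, C, X}"
definition K4_E :: "vtx set set" where
  "K4_E = {{A,B}, {B,C}, {C,A}, {X,A}, {X,B}, {X,C}}"
definition K4_outer :: "vtx set" where "K4_outer = {A, B, C}"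

definition G63_V :: "vtx set" where "G63_V = {A, B, C, X, Y, Z}"
definition G63_E :: "vtx set set" where
  "G63_E = {{A,B}, {B,C}, {C,A}, {X,A}, {X,B}, {X,C}, {B,Y}, {C,Y}, {Y,Z}, {B,Z}}"
definition G63_outer :: "vtx set" where "G63_outer = {A, B, Z, Y, C}"

end

theory Submission
  imports Defs
begin

lemma ex_vtx: "(\<exists>x::vtx. P x) = (P A \<or> P B \<or> P C \<or> P X \<or> P Y \<or> P Z)"
  by (metis vtx.exhaust)
lemma all_vtx: "(\<forall>x::vtx. P x) = (P A \<and> P B \<and> P C \<and> P X \<and> P Y \<and> P Z)"
  by (metis vtx.exhaust)

lemma UNIV_vtx: "(UNIV::vtx set) = {A,B,C,X,Y,Z}" by (auto intro: vtx.exhaust)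
lemma finite_vtx: "finite (UNIV::vtx set)" unfolding UNIV_vtx by simp

definition path3 where "path3 R u w \<longleftrightarrow> u = w \<or> (u,w)\<in>R \<or> (\<exists>m. (u,m)\<in>R \<and> (m,w)\<in>R) \<or> (\<exists>m1 m2. (u,m1)\<in>R \<and> (m1,m2)\<in>R \<and> (m2,w)\<in>R)"
lemma path3: "(u,w)\<in>R^^k \<Longrightarrow> k\<le>3 \<Longrightarrow> path3 R u w"
  unfolding path3_def
  by (cases k; cases "k-1"; cases "k-2"; auto simp: numeral_eq_Suc; force)
definition path2 where "path2 R u w \<longleftrightarrow> u = w \<or> (u,w)\<in>R \<or> (\<exists>m. (u,m)\<in>R \<and> (m,w)\<in>R)"
lemma path2: "(u,w)\<in>R^^k \<Longrightarrow> k\<le>2 \<Longrightarrow> path2 R u w"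
  unfolding path2_def
  by (cases k; cases "k-1"; auto simp: numeral_eq_Suc)

lemma ddist_le: "(u,w)\<in>D^^k \<Longrightarrow> k \<le> b \<Longrightarrow> ddist D u w \<le> b \<and> (u,w)\<in>D\<^sup>*"
  unfolding ddist_def using Least_le[of "\<lambda>k. (u,w)\<in>D^^k" k] relpow_imp_rtrancl by fastforce
lemma pw0: "ddist D u u \<le> b \<and> (u,u)\<in>D\<^sup>*"
  using ddist_le[where k=0 and u=u and w=u and D=D and b=b] by simp
lemma pw1: "(u,w)\<in>D \<Longrightarrow> 1 \<le> b \<Longrightarrow> ddist D u w \<le> b \<and> (u,w)\<in>D\<^sup>*"
  by (rule ddist_le[where k=1]) auto
lemma pw2: "(u,m)\<in>D \<Longrightarrow> (m,w)\<in>D \<Longrightarrow> 2 \<le> b \<Longrightarrow> ddist D u w \<le> b \<and> (u,w)\<in>D\<^sup>*"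
  by (rule ddist_le[where k=2]) (auto simp: numeral_eq_Suc)
lemma pw3: "(u,ma)\<in>D \<Longrightarrow> (ma,mb)\<in>D \<Longrightarrow> (mb,w)\<in>D \<Longrightarrow> 3 \<le> b \<Longrightarrow> ddist D u w \<le> b \<and> (u,w)\<in>D\<^sup>*"
  by (rule ddist_le[where k=3]) (auto simp: numeral_eq_Suc)
lemma pw4: "(u,ma)\<in>D \<Longrightarrow> (ma,mb)\<in>D \<Longrightarrow> (mb,mc)\<in>D \<Longrightarrow> (mc,w)\<in>D \<Longrightarrow> 4 \<le> b \<Longrightarrow> ddist D u w \<le> b \<and> (u,w)\<in>D\<^sup>*"
  by (rule ddist_le[where k=4]) (auto simp: numeral_eq_Suc)

lemma ddist_ge: assumes "(u,w)\<in>D\<^sup>*" "\<forall>k<b. (u,w)\<notin>D^^k" shows "b \<le> ddist D u w"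
proof -
  obtain n where "(u,w)\<in>D^^n" using assms(1) rtrancl_power by blast
  then have "(u,w)\<in>D^^(ddist D u w)" unfolding ddist_def by (rule LeastI)
  then show ?thesis using assms(2) by (meson not_less)
qed

lemma ddiam_set: "{ddist D u w | u w. u \<in> V \<and> w \<in> V} = (\<lambda>(u,w). ddist D u w) ` (V \<times> V)"
  by auto

lemma ddiam_le: assumes "finite V" "V \<noteq> {}" "\<forall>u\<in>V. \<forall>w\<in>V. ddist D u w \<le> b" shows "ddiam V D \<le> b"
  unfolding ddiam_def ddiam_set using assms by (subst Max_le_iff) auto

lemma ddiam_ge: assumes "finite V" "u\<in>V" "w\<in>V" "b \<le> ddist D u w" shows "b \<le> ddiam V D"
  unfolding ddiam_def ddiam_set using assms by (subst Max_ge_iff) auto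

lemma odiam_eq:
  fixes D0 :: "(vtx\<times>vtx) set"
  assumes "is_orientation E D0" "strongly_connected V D0" "ddiam V D0 = b"
    "\<And>D. is_orientation E D \<Longrightarrow> strongly_connected V D \<Longrightarrow> b \<le> ddiam V D"
  shows "odiam V E = b"
  unfolding odiam_def
proof (rule Min_eqI)
  show "finite {ddiam V D |D. is_orientation E D \<and> strongly_connected V D}"
  proof -
    have "finite (UNIV :: (vtx\<times>vtx) set)" by (intro finite_Prod_UNIV finite_vtx)
    then have "finite (Pow (UNIV :: (vtx\<times>vtx) set))" by (simp only: finite_Pow_iff)
    then have "finite {D::(vtx\<times>vtx) set. is_orientation E D \<and> strongly_connected V D}"
      by (rule finite_subset[rotated]) auto
    then show ?thesis using finite_imageI[of "{D. is_orientation E D \<and> strongly_connected V D}" "ddiam V"]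
      by (simp add: setcompr_eq_image)
  qed
qed (use assms in auto)

lemma low_gen:
  assumes "finite V" "strongly_connected V D" "\<exists>u\<in>V. \<exists>w\<in>V. \<forall>k\<le>K. (u,w) \<notin> D^^k"
  shows "Suc K \<le> ddiam V D"
proof -
  obtain u w where uw: "u\<in>V" "w\<in>V" "\<forall>k\<le>K. (u,w) \<notin> D^^k" using assms(3) by blast
  have r: "(u,w)\<in>D\<^sup>*" using uw assms(2) unfolding strongly_connected_def by blast
  have "\<forall>k<Suc K. (u,w)\<notin>D^^k" using uw(3) by (simp add: less_Suc_eq_le)
  then have "Suc K \<le> ddist D u w" by (rule ddist_ge[OF r])
  then show ?thesis by (rule ddiam_ge[OF assms(1) uw(1) uw(2)])
qed

lemma k4_lower: assumes o: "is_orientation K4_E D" shows "\<exists>u\<in>K4_V. \<exists>w\<in>K4_V. \<forall>k\<le>2. (u,w) \<notin> D^^k"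
proof (rule ccontr)
  assume a: "\<not> ?thesis"
  have h: "path2 D u w" if "u\<in>K4_V" "w\<in>K4_V" for u w
  proof -
    from a that obtain k where "k\<le>2" "(u,w)\<in>D^^k" by blast
    then show ?thesis by (intro path2)
  qed
  have ne: "\<And>x y. (x,y)\<in>D \<Longrightarrow> {x,y}\<in>K4_E" using o unfolding is_orientation_def by blast
  have ori: "\<And>x y. {x,y}\<in>K4_E \<Longrightarrow> ((y,x)\<in>D) = ((x,y)\<notin>D)" using o unfolding is_orientation_def by blast
  have e0: "((B,A)\<in>D) = ((A,B)\<notin>D)" by (rule ori) (simp add: K4_E_def)
  have e1: "((C,B)\<in>D) = ((B,C)\<notin>D)" by (rule ori) (simp add: K4_E_def)
  have e2: "((A,C)\<in>D) = ((C,A)\<notin>D)" by (rule ori) (simp add: K4_E_def)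
  have e3: "((A,X)\<in>D) = ((X,A)\<notin>D)" by (rule ori) (simp add: K4_E_def)
  have e4: "((B,X)\<in>D) = ((X,B)\<notin>D)" by (rule ori) (simp add: K4_E_def)
  have e5: "((C,X)\<in>D) = ((X,C)\<notin>D)" by (rule ori) (simp add: K4_E_def)
  have n0: "(A,A)\<notin>D" using ne[of A A] by (auto simp: K4_E_def doubleton_eq_iff)
  have n1: "(A,Y)\<notin>D" using ne[of A Y] by (auto simp: K4_E_def doubleton_eq_iff)
  have n2: "(A,Z)\<notin>D" using ne[of A Z] by (auto simp: K4_E_def doubleton_eq_iff)
  have n3: "(B,B)\<notin>D" using ne[of B B] by (auto simp: K4_E_def doubleton_eq_iff)
  have n4: "(B,Y)\<notin>D" using ne[of B Y] by (auto simp: K4_E_def doubleton_eq_iff)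
  have n5: "(B,Z)\<notin>D" using ne[of B Z] by (auto simp: K4_E_def doubleton_eq_iff)
  have n6: "(C,C)\<notin>D" using ne[of C C] by (auto simp: K4_E_def doubleton_eq_iff)
  have n7: "(C,Y)\<notin>D" using ne[of C Y] by (auto simp: K4_E_def doubleton_eq_iff)
  have n8: "(C,Z)\<notin>D" using ne[of C Z] by (auto simp: K4_E_def doubleton_eq_iff)
  have n9: "(X,X)\<notin>D" using ne[of X X] by (auto simp: K4_E_def doubleton_eq_iff)
  have n10: "(X,Y)\<notin>D" using ne[of X Y] by (auto simp: K4_E_def doubleton_eq_iff)
  have n11: "(X,Z)\<notin>D" using ne[of X Z] by (auto simp: K4_E_def doubleton_eq_iff)
  have n12: "(Y,A)\<notin>D" using ne[of Y A] by (auto simp: K4_E_def doubleton_eq_iff)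
  have n13: "(Y,B)\<notin>D" using ne[of Y B] by (auto simp: K4_E_def doubleton_eq_iff)
  have n14: "(Y,C)\<notin>D" using ne[of Y C] by (auto simp: K4_E_def doubleton_eq_iff)
  have n15: "(Y,X)\<notin>D" using ne[of Y X] by (auto simp: K4_E_def doubleton_eq_iff)
  have n16: "(Y,Y)\<notin>D" using ne[of Y Y] by (auto simp: K4_E_def doubleton_eq_iff)
  have n17: "(Y,Z)\<notin>D" using ne[of Y Z] by (auto simp: K4_E_def doubleton_eq_iff)
  have n18: "(Z,A)\<notin>D" using ne[of Z A] by (auto simp: K4_E_def doubleton_eq_iff)
  have n19: "(Z,B)\<notin>D" using ne[of Z B] by (auto simp: K4_E_def doubleton_eq_iff)
  have n20: "(Z,C)\<notin>D" using ne[of Z C] by (auto simp: K4_E_def doubleton_eq_iff)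
  have n21: "(Z,X)\<notin>D" using ne[of Z X] by (auto simp: K4_E_def doubleton_eq_iff)
  have n22: "(Z,Y)\<notin>D" using ne[of Z Y] by (auto simp: K4_E_def doubleton_eq_iff)
  have n23: "(Z,Z)\<notin>D" using ne[of Z Z] by (auto simp: K4_E_def doubleton_eq_iff)
  have q0: "(((A,B)\<in>D)) \<or> (((C,A)\<notin>D) \<and> ((B,C)\<notin>D)) \<or> (((X,A)\<notin>D) \<and> ((X,B)\<in>D))" using h[of A B] unfolding path2_def ex_vtx by (auto simp: K4_V_def e0 e1 e2 e3 e4 e5 n0 n1 n2 n3 n4 n5 n6 n7 n8 n9 n10 n11 n12 n13 n14 n15 n16 n17 n18 n19 n20 n21 n22 n23)
  have q1: "(((A,B)\<in>D) \<and> ((B,C)\<in>D)) \<or> (((C,A)\<notin>D)) \<or> (((X,A)\<notin>D) \<and> ((X,C)\<in>D))" using h[of A C] unfolding path2_def ex_vtx by (auto simp: K4_V_def e0 e1 e2 e3 e4 e5 n0 n1 n2 n3 n4 n5 n6 n7 n8 n9 n10 n11 n12 n13 n14 n15 n16 n17 n18 n19 n20 n21 n22 n23)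
  have q2: "(((A,B)\<in>D) \<and> ((X,B)\<notin>D)) \<or> (((C,A)\<notin>D) \<and> ((X,C)\<notin>D)) \<or> (((X,A)\<notin>D))" using h[of A X] unfolding path2_def ex_vtx by (auto simp: K4_V_def e0 e1 e2 e3 e4 e5 n0 n1 n2 n3 n4 n5 n6 n7 n8 n9 n10 n11 n12 n13 n14 n15 n16 n17 n18 n19 n20 n21 n22 n23)
  have q3: "(((A,B)\<notin>D)) \<or> (((B,C)\<in>D) \<and> ((C,A)\<in>D)) \<or> (((X,B)\<notin>D) \<and> ((X,A)\<in>D))" using h[of B A] unfolding path2_def ex_vtx by (auto simp: K4_V_def e0 e1 e2 e3 e4 e5 n0 n1 n2 n3 n4 n5 n6 n7 n8 n9 n10 n11 n12 n13 n14 n15 n16 n17 n18 n19 n20 n21 n22 n23)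
  have q4: "(((A,B)\<notin>D) \<and> ((C,A)\<notin>D)) \<or> (((B,C)\<in>D)) \<or> (((X,B)\<notin>D) \<and> ((X,C)\<in>D))" using h[of B C] unfolding path2_def ex_vtx by (auto simp: K4_V_def e0 e1 e2 e3 e4 e5 n0 n1 n2 n3 n4 n5 n6 n7 n8 n9 n10 n11 n12 n13 n14 n15 n16 n17 n18 n19 n20 n21 n22 n23)
  have q5: "(((A,B)\<notin>D) \<and> ((X,A)\<notin>D)) \<or> (((B,C)\<in>D) \<and> ((X,C)\<notin>D)) \<or> (((X,B)\<notin>D))" using h[of B X] unfolding path2_def ex_vtx by (auto simp: K4_V_def e0 e1 e2 e3 e4 e5 n0 n1 n2 n3 n4 n5 n6 n7 n8 n9 n10 n11 n12 n13 n14 n15 n16 n17 n18 n19 n20 n21 n22 n23)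
  have q6: "(((C,A)\<in>D)) \<or> (((B,C)\<notin>D) \<and> ((A,B)\<notin>D)) \<or> (((X,C)\<notin>D) \<and> ((X,A)\<in>D))" using h[of C A] unfolding path2_def ex_vtx by (auto simp: K4_V_def e0 e1 e2 e3 e4 e5 n0 n1 n2 n3 n4 n5 n6 n7 n8 n9 n10 n11 n12 n13 n14 n15 n16 n17 n18 n19 n20 n21 n22 n23)
  have q7: "(((C,A)\<in>D) \<and> ((A,B)\<in>D)) \<or> (((B,C)\<notin>D)) \<or> (((X,C)\<notin>D) \<and> ((X,B)\<in>D))" using h[of C B] unfolding path2_def ex_vtx by (auto simp: K4_V_def e0 e1 e2 e3 e4 e5 n0 n1 n2 n3 n4 n5 n6 n7 n8 n9 n10 n11 n12 n13 n14 n15 n16 n17 n18 n19 n20 n21 n22 n23)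
  have q8: "(((C,A)\<in>D) \<and> ((X,A)\<notin>D)) \<or> (((B,C)\<notin>D) \<and> ((X,B)\<notin>D)) \<or> (((X,C)\<notin>D))" using h[of C X] unfolding path2_def ex_vtx by (auto simp: K4_V_def e0 e1 e2 e3 e4 e5 n0 n1 n2 n3 n4 n5 n6 n7 n8 n9 n10 n11 n12 n13 n14 n15 n16 n17 n18 n19 n20 n21 n22 n23)
  have q9: "(((X,A)\<in>D)) \<or> (((X,B)\<in>D) \<and> ((A,B)\<notin>D)) \<or> (((X,C)\<in>D) \<and> ((C,A)\<in>D))" using h[of X A] unfolding path2_def ex_vtx by (auto simp: K4_V_def e0 e1 e2 e3 e4 e5 n0 n1 n2 n3 n4 n5 n6 n7 n8 n9 n10 n11 n12 n13 n14 n15 n16 n17 n18 n19 n20 n21 n22 n23)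
  have q10: "(((X,A)\<in>D) \<and> ((A,B)\<in>D)) \<or> (((X,B)\<in>D)) \<or> (((X,C)\<in>D) \<and> ((B,C)\<notin>D))" using h[of X B] unfolding path2_def ex_vtx by (auto simp: K4_V_def e0 e1 e2 e3 e4 e5 n0 n1 n2 n3 n4 n5 n6 n7 n8 n9 n10 n11 n12 n13 n14 n15 n16 n17 n18 n19 n20 n21 n22 n23)
  have q11: "(((X,A)\<in>D) \<and> ((C,A)\<notin>D)) \<or> (((X,B)\<in>D) \<and> ((B,C)\<in>D)) \<or> (((X,C)\<in>D))" using h[of X C] unfolding path2_def ex_vtx by (auto simp: K4_V_def e0 e1 e2 e3 e4 e5 n0 n1 n2 n3 n4 n5 n6 n7 n8 n9 n10 n11 n12 n13 n14 n15 n16 n17 n18 n19 n20 n21 n22 n23)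
  show False using q0 q1 q2 q3 q4 q5 q6 q7 q8 q9 q10 q11 by satx
qed

lemma k4_low: "is_orientation K4_E D \<Longrightarrow> strongly_connected K4_V D \<Longrightarrow> 3 \<le> ddiam K4_V D"
  using low_gen[of K4_V D 2] k4_lower by (simp add: K4_V_def)

lemma g63_lower: assumes o: "is_orientation G63_E D" shows "\<exists>u\<in>G63_V. \<exists>w\<in>G63_V. \<forall>k\<le>3. (u,w) \<notin> D^^k"
proof (rule ccontr)
  assume a: "\<not> ?thesis"
  have h: "path3 D u w" if "u\<in>G63_V" "w\<in>G63_V" for u w
  proof -
    from a that obtain k where "k\<le>3" "(u,w)\<in>D^^k" by blast
    then show ?thesis by (intro path3)
  qed
  have ne: "\<And>x y. (x,y)\<in>D \<Longrightarrow> {x,y}\<in>G63_E" using o unfolding is_orientation_def by blast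
  have ori: "\<And>x y. {x,y}\<in>G63_E \<Longrightarrow> ((y,x)\<in>D) = ((x,y)\<notin>D)" using o unfolding is_orientation_def by blast
  have e0: "((B,A)\<in>D) = ((A,B)\<notin>D)" by (rule ori) (simp add: G63_E_def)
  have e1: "((C,B)\<in>D) = ((B,C)\<notin>D)" by (rule ori) (simp add: G63_E_def)
  have e2: "((A,C)\<in>D) = ((C,A)\<notin>D)" by (rule ori) (simp add: G63_E_def)
  have e3: "((A,X)\<in>D) = ((X,A)\<notin>D)" by (rule ori) (simp add: G63_E_def)
  have e4: "((B,X)\<in>D) = ((X,B)\<notin>D)" by (rule ori) (simp add: G63_E_def)
  have e5: "((C,X)\<in>D) = ((X,C)\<notin>D)" by (rule ori) (simp add: G63_E_def)
  have e6: "((Y,B)\<in>D) = ((B,Y)\<notin>D)" by (rule ori) (simp add: G63_E_def)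
  have e7: "((Y,C)\<in>D) = ((C,Y)\<notin>D)" by (rule ori) (simp add: G63_E_def)
  have e8: "((Z,Y)\<in>D) = ((Y,Z)\<notin>D)" by (rule ori) (simp add: G63_E_def)
  have e9: "((Z,B)\<in>D) = ((B,Z)\<notin>D)" by (rule ori) (simp add: G63_E_def)
  have n0: "(A,A)\<notin>D" using ne[of A A] by (auto simp: G63_E_def doubleton_eq_iff)
  have n1: "(A,Y)\<notin>D" using ne[of A Y] by (auto simp: G63_E_def doubleton_eq_iff)
  have n2: "(A,Z)\<notin>D" using ne[of A Z] by (auto simp: G63_E_def doubleton_eq_iff)
  have n3: "(B,B)\<notin>D" using ne[of B B] by (auto simp: G63_E_def doubleton_eq_iff)
  have n4: "(C,C)\<notin>D" using ne[of C C] by (auto simp: G63_E_def doubleton_eq_iff)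
  have n5: "(C,Z)\<notin>D" using ne[of C Z] by (auto simp: G63_E_def doubleton_eq_iff)
  have n6: "(X,X)\<notin>D" using ne[of X X] by (auto simp: G63_E_def doubleton_eq_iff)
  have n7: "(X,Y)\<notin>D" using ne[of X Y] by (auto simp: G63_E_def doubleton_eq_iff)
  have n8: "(X,Z)\<notin>D" using ne[of X Z] by (auto simp: G63_E_def doubleton_eq_iff)
  have n9: "(Y,A)\<notin>D" using ne[of Y A] by (auto simp: G63_E_def doubleton_eq_iff)
  have n10: "(Y,X)\<notin>D" using ne[of Y X] by (auto simp: G63_E_def doubleton_eq_iff)
  have n11: "(Y,Y)\<notin>D" using ne[of Y Y] by (auto simp: G63_E_def doubleton_eq_iff)
  have n12: "(Z,A)\<notin>D" using ne[of Z A] by (auto simp: G63_E_def doubleton_eq_iff)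
  have n13: "(Z,C)\<notin>D" using ne[of Z C] by (auto simp: G63_E_def doubleton_eq_iff)
  have n14: "(Z,X)\<notin>D" using ne[of Z X] by (auto simp: G63_E_def doubleton_eq_iff)
  have n15: "(Z,Z)\<notin>D" using ne[of Z Z] by (auto simp: G63_E_def doubleton_eq_iff)
  have q0: "(((A,B)\<in>D)) \<or> (((C,A)\<notin>D) \<and> ((B,C)\<notin>D)) \<or> (((C,A)\<notin>D) \<and> ((X,C)\<notin>D) \<and> ((X,B)\<in>D)) \<or> (((C,A)\<notin>D) \<and> ((C,Y)\<in>D) \<and> ((B,Y)\<notin>D)) \<or> (((X,A)\<notin>D) \<and> ((X,B)\<in>D)) \<or> (((X,A)\<notin>D) \<and> ((X,C)\<in>D) \<and> ((B,C)\<notin>D))" using h[of A B] unfolding path3_def ex_vtx by (auto simp: G63_V_def e0 e1 e2 e3 e4 e5 e6 e7 e8 e9 n0 n1 n2 n3 n4 n5 n6 n7 n8 n9 n10 n11 n12 n13 n14 n15)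
  have q1: "(((A,B)\<in>D) \<and> ((B,C)\<in>D)) \<or> (((A,B)\<in>D) \<and> ((X,B)\<notin>D) \<and> ((X,C)\<in>D)) \<or> (((A,B)\<in>D) \<and> ((B,Y)\<in>D) \<and> ((C,Y)\<notin>D)) \<or> (((C,A)\<notin>D)) \<or> (((X,A)\<notin>D) \<and> ((X,B)\<in>D) \<and> ((B,C)\<in>D)) \<or> (((X,A)\<notin>D) \<and> ((X,C)\<in>D))" using h[of A C] unfolding path3_def ex_vtx by (auto simp: G63_V_def e0 e1 e2 e3 e4 e5 e6 e7 e8 e9 n0 n1 n2 n3 n4 n5 n6 n7 n8 n9 n10 n11 n12 n13 n14 n15)
  have q2: "(((A,B)\<in>D) \<and> ((B,C)\<in>D) \<and> ((X,C)\<notin>D)) \<or> (((A,B)\<in>D) \<and> ((X,B)\<notin>D)) \<or> (((C,A)\<notin>D) \<and> ((B,C)\<notin>D) \<and> ((X,B)\<notin>D)) \<or> (((C,A)\<notin>D) \<and> ((X,C)\<notin>D)) \<or> (((X,A)\<notin>D))" using h[of A X] unfolding path3_def ex_vtx by (auto simp: G63_V_def e0 e1 e2 e3 e4 e5 e6 e7 e8 e9 n0 n1 n2 n3 n4 n5 n6 n7 n8 n9 n10 n11 n12 n13 n14 n15)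
  have q3: "(((A,B)\<in>D) \<and> ((B,C)\<in>D) \<and> ((C,Y)\<in>D)) \<or> (((A,B)\<in>D) \<and> ((B,Y)\<in>D)) \<or> (((A,B)\<in>D) \<and> ((B,Z)\<in>D) \<and> ((Y,Z)\<notin>D)) \<or> (((C,A)\<notin>D) \<and> ((B,C)\<notin>D) \<and> ((B,Y)\<in>D)) \<or> (((C,A)\<notin>D) \<and> ((C,Y)\<in>D)) \<or> (((X,A)\<notin>D) \<and> ((X,B)\<in>D) \<and> ((B,Y)\<in>D)) \<or> (((X,A)\<notin>D) \<and> ((X,C)\<in>D) \<and> ((C,Y)\<in>D))" using h[of A Y] unfolding path3_def ex_vtx by (auto simp: G63_V_def e0 e1 e2 e3 e4 e5 e6 e7 e8 e9 n0 n1 n2 n3 n4 n5 n6 n7 n8 n9 n10 n11 n12 n13 n14 n15)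
  have q4: "(((A,B)\<in>D) \<and> ((B,Y)\<in>D) \<and> ((Y,Z)\<in>D)) \<or> (((A,B)\<in>D) \<and> ((B,Z)\<in>D)) \<or> (((C,A)\<notin>D) \<and> ((B,C)\<notin>D) \<and> ((B,Z)\<in>D)) \<or> (((C,A)\<notin>D) \<and> ((C,Y)\<in>D) \<and> ((Y,Z)\<in>D)) \<or> (((X,A)\<notin>D) \<and> ((X,B)\<in>D) \<and> ((B,Z)\<in>D))" using h[of A Z] unfolding path3_def ex_vtx by (auto simp: G63_V_def e0 e1 e2 e3 e4 e5 e6 e7 e8 e9 n0 n1 n2 n3 n4 n5 n6 n7 n8 n9 n10 n11 n12 n13 n14 n15)
  have q5: "(((A,B)\<notin>D)) \<or> (((B,C)\<in>D) \<and> ((C,A)\<in>D)) \<or> (((B,C)\<in>D) \<and> ((X,C)\<notin>D) \<and> ((X,A)\<in>D)) \<or> (((X,B)\<notin>D) \<and> ((X,A)\<in>D)) \<or> (((X,B)\<notin>D) \<and> ((X,C)\<in>D) \<and> ((C,A)\<in>D)) \<or> (((B,Y)\<in>D) \<and> ((C,Y)\<notin>D) \<and> ((C,A)\<in>D))" using h[of B A] unfolding path3_def ex_vtx by (auto simp: G63_V_def e0 e1 e2 e3 e4 e5 e6 e7 e8 e9 n0 n1 n2 n3 n4 n5 n6 n7 n8 n9 n10 n11 n12 n13 n14 n15)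
  have q6: "(((A,B)\<notin>D) \<and> ((C,A)\<notin>D)) \<or> (((A,B)\<notin>D) \<and> ((X,A)\<notin>D) \<and> ((X,C)\<in>D)) \<or> (((B,C)\<in>D)) \<or> (((X,B)\<notin>D) \<and> ((X,A)\<in>D) \<and> ((C,A)\<notin>D)) \<or> (((X,B)\<notin>D) \<and> ((X,C)\<in>D)) \<or> (((B,Y)\<in>D) \<and> ((C,Y)\<notin>D)) \<or> (((B,Z)\<in>D) \<and> ((Y,Z)\<notin>D) \<and> ((C,Y)\<notin>D))" using h[of B C] unfolding path3_def ex_vtx by (auto simp: G63_V_def e0 e1 e2 e3 e4 e5 e6 e7 e8 e9 n0 n1 n2 n3 n4 n5 n6 n7 n8 n9 n10 n11 n12 n13 n14 n15)
  have q7: "(((A,B)\<notin>D) \<and> ((C,A)\<notin>D) \<and> ((X,C)\<notin>D)) \<or> (((A,B)\<notin>D) \<and> ((X,A)\<notin>D)) \<or> (((B,C)\<in>D) \<and> ((C,A)\<in>D) \<and> ((X,A)\<notin>D)) \<or> (((B,C)\<in>D) \<and> ((X,C)\<notin>D)) \<or> (((X,B)\<notin>D)) \<or> (((B,Y)\<in>D) \<and> ((C,Y)\<notin>D) \<and> ((X,C)\<notin>D))" using h[of B X] unfolding path3_def ex_vtx by (auto simp: G63_V_def e0 e1 e2 e3 e4 e5 e6 e7 e8 e9 n0 n1 n2 n3 n4 n5 n6 n7 n8 n9 n10 n11 n12 n13 n14 n15)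
  have q8: "(((A,B)\<notin>D) \<and> ((C,A)\<notin>D) \<and> ((C,Y)\<in>D)) \<or> (((B,C)\<in>D) \<and> ((C,Y)\<in>D)) \<or> (((X,B)\<notin>D) \<and> ((X,C)\<in>D) \<and> ((C,Y)\<in>D)) \<or> (((B,Y)\<in>D)) \<or> (((B,Z)\<in>D) \<and> ((Y,Z)\<notin>D))" using h[of B Y] unfolding path3_def ex_vtx by (auto simp: G63_V_def e0 e1 e2 e3 e4 e5 e6 e7 e8 e9 n0 n1 n2 n3 n4 n5 n6 n7 n8 n9 n10 n11 n12 n13 n14 n15)
  have q9: "(((B,C)\<in>D) \<and> ((C,Y)\<in>D) \<and> ((Y,Z)\<in>D)) \<or> (((B,Y)\<in>D) \<and> ((Y,Z)\<in>D)) \<or> (((B,Z)\<in>D))" using h[of B Z] unfolding path3_def ex_vtx by (auto simp: G63_V_def e0 e1 e2 e3 e4 e5 e6 e7 e8 e9 n0 n1 n2 n3 n4 n5 n6 n7 n8 n9 n10 n11 n12 n13 n14 n15)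
  have q10: "(((C,A)\<in>D)) \<or> (((B,C)\<notin>D) \<and> ((A,B)\<notin>D)) \<or> (((B,C)\<notin>D) \<and> ((X,B)\<notin>D) \<and> ((X,A)\<in>D)) \<or> (((X,C)\<notin>D) \<and> ((X,A)\<in>D)) \<or> (((X,C)\<notin>D) \<and> ((X,B)\<in>D) \<and> ((A,B)\<notin>D)) \<or> (((C,Y)\<in>D) \<and> ((B,Y)\<notin>D) \<and> ((A,B)\<notin>D))" using h[of C A] unfolding path3_def ex_vtx by (auto simp: G63_V_def e0 e1 e2 e3 e4 e5 e6 e7 e8 e9 n0 n1 n2 n3 n4 n5 n6 n7 n8 n9 n10 n11 n12 n13 n14 n15)
  have q11: "(((C,A)\<in>D) \<and> ((A,B)\<in>D)) \<or> (((C,A)\<in>D) \<and> ((X,A)\<notin>D) \<and> ((X,B)\<in>D)) \<or> (((B,C)\<notin>D)) \<or> (((X,C)\<notin>D) \<and> ((X,A)\<in>D) \<and> ((A,B)\<in>D)) \<or> (((X,C)\<notin>D) \<and> ((X,B)\<in>D)) \<or> (((C,Y)\<in>D) \<and> ((B,Y)\<notin>D)) \<or> (((C,Y)\<in>D) \<and> ((Y,Z)\<in>D) \<and> ((B,Z)\<notin>D))" using h[of C B] unfolding path3_def ex_vtx by (auto simp: G63_V_def e0 e1 e2 e3 e4 e5 e6 e7 e8 e9 n0 n1 n2 n3 n4 n5 n6 n7 n8 n9 n10 n11 n12 n13 n14 n15)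
  have q12: "(((C,A)\<in>D) \<and> ((A,B)\<in>D) \<and> ((X,B)\<notin>D)) \<or> (((C,A)\<in>D) \<and> ((X,A)\<notin>D)) \<or> (((B,C)\<notin>D) \<and> ((A,B)\<notin>D) \<and> ((X,A)\<notin>D)) \<or> (((B,C)\<notin>D) \<and> ((X,B)\<notin>D)) \<or> (((X,C)\<notin>D)) \<or> (((C,Y)\<in>D) \<and> ((B,Y)\<notin>D) \<and> ((X,B)\<notin>D))" using h[of C X] unfolding path3_def ex_vtx by (auto simp: G63_V_def e0 e1 e2 e3 e4 e5 e6 e7 e8 e9 n0 n1 n2 n3 n4 n5 n6 n7 n8 n9 n10 n11 n12 n13 n14 n15)
  have q13: "(((C,A)\<in>D) \<and> ((A,B)\<in>D) \<and> ((B,Y)\<in>D)) \<or> (((B,C)\<notin>D) \<and> ((B,Y)\<in>D)) \<or> (((B,C)\<notin>D) \<and> ((B,Z)\<in>D) \<and> ((Y,Z)\<notin>D)) \<or> (((X,C)\<notin>D) \<and> ((X,B)\<in>D) \<and> ((B,Y)\<in>D)) \<or> (((C,Y)\<in>D))" using h[of C Y] unfolding path3_def ex_vtx by (auto simp: G63_V_def e0 e1 e2 e3 e4 e5 e6 e7 e8 e9 n0 n1 n2 n3 n4 n5 n6 n7 n8 n9 n10 n11 n12 n13 n14 n15)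
  have q14: "(((C,A)\<in>D) \<and> ((A,B)\<in>D) \<and> ((B,Z)\<in>D)) \<or> (((B,C)\<notin>D) \<and> ((B,Y)\<in>D) \<and> ((Y,Z)\<in>D)) \<or> (((B,C)\<notin>D) \<and> ((B,Z)\<in>D)) \<or> (((X,C)\<notin>D) \<and> ((X,B)\<in>D) \<and> ((B,Z)\<in>D)) \<or> (((C,Y)\<in>D) \<and> ((B,Y)\<notin>D) \<and> ((B,Z)\<in>D)) \<or> (((C,Y)\<in>D) \<and> ((Y,Z)\<in>D))" using h[of C Z] unfolding path3_def ex_vtx by (auto simp: G63_V_def e0 e1 e2 e3 e4 e5 e6 e7 e8 e9 n0 n1 n2 n3 n4 n5 n6 n7 n8 n9 n10 n11 n12 n13 n14 n15)
  have q15: "(((X,A)\<in>D)) \<or> (((X,B)\<in>D) \<and> ((A,B)\<notin>D)) \<or> (((X,B)\<in>D) \<and> ((B,C)\<in>D) \<and> ((C,A)\<in>D)) \<or> (((X,C)\<in>D) \<and> ((C,A)\<in>D)) \<or> (((X,C)\<in>D) \<and> ((B,C)\<notin>D) \<and> ((A,B)\<notin>D))" using h[of X A] unfolding path3_def ex_vtx by (auto simp: G63_V_def e0 e1 e2 e3 e4 e5 e6 e7 e8 e9 n0 n1 n2 n3 n4 n5 n6 n7 n8 n9 n10 n11 n12 n13 n14 n15)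
  have q16: "(((X,A)\<in>D) \<and> ((A,B)\<in>D)) \<or> (((X,A)\<in>D) \<and> ((C,A)\<notin>D) \<and> ((B,C)\<notin>D)) \<or> (((X,B)\<in>D)) \<or> (((X,C)\<in>D) \<and> ((C,A)\<in>D) \<and> ((A,B)\<in>D)) \<or> (((X,C)\<in>D) \<and> ((B,C)\<notin>D)) \<or> (((X,C)\<in>D) \<and> ((C,Y)\<in>D) \<and> ((B,Y)\<notin>D))" using h[of X B] unfolding path3_def ex_vtx by (auto simp: G63_V_def e0 e1 e2 e3 e4 e5 e6 e7 e8 e9 n0 n1 n2 n3 n4 n5 n6 n7 n8 n9 n10 n11 n12 n13 n14 n15)
  have q17: "(((X,A)\<in>D) \<and> ((A,B)\<in>D) \<and> ((B,C)\<in>D)) \<or> (((X,A)\<in>D) \<and> ((C,A)\<notin>D)) \<or> (((X,B)\<in>D) \<and> ((A,B)\<notin>D) \<and> ((C,A)\<notin>D)) \<or> (((X,B)\<in>D) \<and> ((B,C)\<in>D)) \<or> (((X,B)\<in>D) \<and> ((B,Y)\<in>D) \<and> ((C,Y)\<notin>D)) \<or> (((X,C)\<in>D))" using h[of X C] unfolding path3_def ex_vtx by (auto simp: G63_V_def e0 e1 e2 e3 e4 e5 e6 e7 e8 e9 n0 n1 n2 n3 n4 n5 n6 n7 n8 n9 n10 n11 n12 n13 n14 n15)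
  have q18: "(((X,A)\<in>D) \<and> ((A,B)\<in>D) \<and> ((B,Y)\<in>D)) \<or> (((X,A)\<in>D) \<and> ((C,A)\<notin>D) \<and> ((C,Y)\<in>D)) \<or> (((X,B)\<in>D) \<and> ((B,C)\<in>D) \<and> ((C,Y)\<in>D)) \<or> (((X,B)\<in>D) \<and> ((B,Y)\<in>D)) \<or> (((X,B)\<in>D) \<and> ((B,Z)\<in>D) \<and> ((Y,Z)\<notin>D)) \<or> (((X,C)\<in>D) \<and> ((B,C)\<notin>D) \<and> ((B,Y)\<in>D)) \<or> (((X,C)\<in>D) \<and> ((C,Y)\<in>D))" using h[of X Y] unfolding path3_def ex_vtx by (auto simp: G63_V_def e0 e1 e2 e3 e4 e5 e6 e7 e8 e9 n0 n1 n2 n3 n4 n5 n6 n7 n8 n9 n10 n11 n12 n13 n14 n15)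
  have q19: "(((X,A)\<in>D) \<and> ((A,B)\<in>D) \<and> ((B,Z)\<in>D)) \<or> (((X,B)\<in>D) \<and> ((B,Y)\<in>D) \<and> ((Y,Z)\<in>D)) \<or> (((X,B)\<in>D) \<and> ((B,Z)\<in>D)) \<or> (((X,C)\<in>D) \<and> ((B,C)\<notin>D) \<and> ((B,Z)\<in>D)) \<or> (((X,C)\<in>D) \<and> ((C,Y)\<in>D) \<and> ((Y,Z)\<in>D))" using h[of X Z] unfolding path3_def ex_vtx by (auto simp: G63_V_def e0 e1 e2 e3 e4 e5 e6 e7 e8 e9 n0 n1 n2 n3 n4 n5 n6 n7 n8 n9 n10 n11 n12 n13 n14 n15)
  have q20: "(((B,Y)\<notin>D) \<and> ((A,B)\<notin>D)) \<or> (((B,Y)\<notin>D) \<and> ((B,C)\<in>D) \<and> ((C,A)\<in>D)) \<or> (((B,Y)\<notin>D) \<and> ((X,B)\<notin>D) \<and> ((X,A)\<in>D)) \<or> (((C,Y)\<notin>D) \<and> ((C,A)\<in>D)) \<or> (((C,Y)\<notin>D) \<and> ((B,C)\<notin>D) \<and> ((A,B)\<notin>D)) \<or> (((C,Y)\<notin>D) \<and> ((X,C)\<notin>D) \<and> ((X,A)\<in>D)) \<or> (((Y,Z)\<in>D) \<and> ((B,Z)\<notin>D) \<and> ((A,B)\<notin>D))" using h[of Y A] unfolding path3_def ex_vtx by (auto simp: G63_V_def e0 e1 e2 e3 e4 e5 e6 e7 e8 e9 n0 n1 n2 n3 n4 n5 n6 n7 n8 n9 n10 n11 n12 n13 n14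 n15)
  have q21: "(((B,Y)\<notin>D)) \<or> (((C,Y)\<notin>D) \<and> ((C,A)\<in>D) \<and> ((A,B)\<in>D)) \<or> (((C,Y)\<notin>D) \<and> ((B,C)\<notin>D)) \<or> (((C,Y)\<notin>D) \<and> ((X,C)\<notin>D) \<and> ((X,B)\<in>D)) \<or> (((Y,Z)\<in>D) \<and> ((B,Z)\<notin>D))" using h[of Y B] unfolding path3_def ex_vtx by (auto simp: G63_V_def e0 e1 e2 e3 e4 e5 e6 e7 e8 e9 n0 n1 n2 n3 n4 n5 n6 n7 n8 n9 n10 n11 n12 n13 n14 n15)
  have q22: "(((B,Y)\<notin>D) \<and> ((A,B)\<notin>D) \<and> ((C,A)\<notin>D)) \<or> (((B,Y)\<notin>D) \<and> ((B,C)\<in>D)) \<or> (((B,Y)\<notin>D) \<and> ((X,B)\<notin>D) \<and> ((X,C)\<in>D)) \<or> (((C,Y)\<notin>D)) \<or> (((Y,Z)\<in>D) \<and> ((B,Z)\<notin>D) \<and> ((B,C)\<in>D))" using h[of Y C] unfolding path3_def ex_vtx by (auto simp: G63_V_def e0 e1 e2 e3 e4 e5 e6 e7 e8 e9 n0 n1 n2 n3 n4 n5 n6 n7 n8 n9 n10 n11 n12 n13 n14 n15)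
  have q23: "(((B,Y)\<notin>D) \<and> ((A,B)\<notin>D) \<and> ((X,A)\<notin>D)) \<or> (((B,Y)\<notin>D) \<and> ((B,C)\<in>D) \<and> ((X,C)\<notin>D)) \<or> (((B,Y)\<notin>D) \<and> ((X,B)\<notin>D)) \<or> (((C,Y)\<notin>D) \<and> ((C,A)\<in>D) \<and> ((X,A)\<notin>D)) \<or> (((C,Y)\<notin>D) \<and> ((B,C)\<notin>D) \<and> ((X,B)\<notin>D)) \<or> (((C,Y)\<notin>D) \<and> ((X,C)\<notin>D)) \<or> (((Y,Z)\<in>D) \<and> ((B,Z)\<notin>D) \<and> ((X,B)\<notin>D))" using h[of Y X] unfolding path3_def ex_vtx by (auto simp: G63_V_def e0 e1 e2 e3 e4 e5 e6 e7 e8 e9 n0 n1 n2 n3 n4 n5 n6 n7 n8 n9 n10 n11 n12 n13 n14 n15)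
  have q24: "(((B,Y)\<notin>D) \<and> ((B,Z)\<in>D)) \<or> (((C,Y)\<notin>D) \<and> ((B,C)\<notin>D) \<and> ((B,Z)\<in>D)) \<or> (((Y,Z)\<in>D))" using h[of Y Z] unfolding path3_def ex_vtx by (auto simp: G63_V_def e0 e1 e2 e3 e4 e5 e6 e7 e8 e9 n0 n1 n2 n3 n4 n5 n6 n7 n8 n9 n10 n11 n12 n13 n14 n15)
  have q25: "(((B,Z)\<notin>D) \<and> ((A,B)\<notin>D)) \<or> (((B,Z)\<notin>D) \<and> ((B,C)\<in>D) \<and> ((C,A)\<in>D)) \<or> (((B,Z)\<notin>D) \<and> ((X,B)\<notin>D) \<and> ((X,A)\<in>D)) \<or> (((Y,Z)\<notin>D) \<and> ((B,Y)\<notin>D) \<and> ((A,B)\<notin>D)) \<or> (((Y,Z)\<notin>D) \<and> ((C,Y)\<notin>D) \<and> ((C,A)\<in>D))" using h[of Z A] unfolding path3_def ex_vtx by (auto simp: G63_V_def e0 e1 e2 e3 e4 e5 e6 e7 e8 e9 n0 n1 n2 n3 n4 n5 n6 n7 n8 n9 n10 n11 n12 n13 n14 n15)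
  have q26: "(((B,Z)\<notin>D)) \<or> (((Y,Z)\<notin>D) \<and> ((B,Y)\<notin>D)) \<or> (((Y,Z)\<notin>D) \<and> ((C,Y)\<notin>D) \<and> ((B,C)\<notin>D))" using h[of Z B] unfolding path3_def ex_vtx by (auto simp: G63_V_def e0 e1 e2 e3 e4 e5 e6 e7 e8 e9 n0 n1 n2 n3 n4 n5 n6 n7 n8 n9 n10 n11 n12 n13 n14 n15)
  have q27: "(((B,Z)\<notin>D) \<and> ((A,B)\<notin>D) \<and> ((C,A)\<notin>D)) \<or> (((B,Z)\<notin>D) \<and> ((B,C)\<in>D)) \<or> (((B,Z)\<notin>D) \<and> ((X,B)\<notin>D) \<and> ((X,C)\<in>D)) \<or> (((B,Z)\<notin>D) \<and> ((B,Y)\<in>D) \<and> ((C,Y)\<notin>D)) \<or> (((Y,Z)\<notin>D) \<and> ((B,Y)\<notin>D) \<and> ((B,C)\<in>D)) \<or> (((Y,Z)\<notin>D) \<and> ((C,Y)\<notin>D))" using h[of Z C] unfolding path3_def ex_vtx by (auto simp: G63_V_def e0 e1 e2 e3 e4 e5 e6 e7 e8 e9 n0 n1 n2 n3 n4 n5 n6 n7 n8 n9 n10 n11 n12 n13 n14 n15)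
  have q28: "(((B,Z)\<notin>D) \<and> ((A,B)\<notin>D) \<and> ((X,A)\<notin>D)) \<or> (((B,Z)\<notin>D) \<and> ((B,C)\<in>D) \<and> ((X,C)\<notin>D)) \<or> (((B,Z)\<notin>D) \<and> ((X,B)\<notin>D)) \<or> (((Y,Z)\<notin>D) \<and> ((B,Y)\<notin>D) \<and> ((X,B)\<notin>D)) \<or> (((Y,Z)\<notin>D) \<and> ((C,Y)\<notin>D) \<and> ((X,C)\<notin>D))" using h[of Z X] unfolding path3_def ex_vtx by (auto simp: G63_V_def e0 e1 e2 e3 e4 e5 e6 e7 e8 e9 n0 n1 n2 n3 n4 n5 n6 n7 n8 n9 n10 n11 n12 n13 n14 n15)
  have q29: "(((B,Z)\<notin>D) \<and> ((B,C)\<in>D) \<and> ((C,Y)\<in>D)) \<or> (((B,Z)\<notin>D) \<and> ((B,Y)\<in>D)) \<or> (((Y,Z)\<notin>D))" using h[of Z Y] unfolding path3_def ex_vtx by (auto simp: G63_V_def e0 e1 e2 e3 e4 e5 e6 e7 e8 e9 n0 n1 n2 n3 n4 n5 n6 n7 n8 n9 n10 n11 n12 n13 n14 n15)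
  show False using q0 q1 q2 q3 q4 q5 q6 q7 q8 q9 q10 q11 q12 q13 q14 q15 q16 q17 q18 q19 q20 q21 q22 q23 q24 q25 q26 q27 q28 q29 by satx
qed

lemma g63_low: "is_orientation G63_E D \<Longrightarrow> strongly_connected G63_V D \<Longrightarrow> 4 \<le> ddiam G63_V D"
  using low_gen[of G63_V D 3] g63_lower by (simp add: G63_V_def)

definition KD1 :: "(vtx\<times>vtx) set" where "KD1 = {(A,B), (B,C), (C,A), (X,A), (B,X), (X,C)}"
lemma KD1_props: "is_orientation K4_E KD1 \<and> strongly_connected K4_V KD1 \<and> ddiam K4_V KD1 = 3 \<and> (\<forall>v\<in>{A}. \<forall>u\<in>K4_V. ddist KD1 u v \<le> 2 \<and> ddist KD1 v u \<le> 2)"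
proof -
  have o: "is_orientation K4_E KD1" unfolding is_orientation_def KD1_def K4_E_def all_vtx by (simp add: doubleton_eq_iff)
  have fAA: "\<And>b. 0 \<le> b \<Longrightarrow> ddist KD1 A A \<le> b \<and> (A,A)\<in>KD1\<^sup>*" by (rule pw0)
  have rAA: "(A,A)\<in>KD1\<^sup>*" using fAA[of 0] by simp
  have fAB: "\<And>b. 1 \<le> b \<Longrightarrow> ddist KD1 A B \<le> b \<and> (A,B)\<in>KD1\<^sup>*" by (rule pw1) (simp_all add: KD1_def)
  have rAB: "(A,B)\<in>KD1\<^sup>*" using fAB[of 1] by simp
  have fAC: "\<And>b. 2 \<le> b \<Longrightarrow> ddist KD1 A C \<le> b \<and> (A,C)\<in>KD1\<^sup>*" by (rule pw2[where m=B]) (simp_all add: KD1_def)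
  have rAC: "(A,C)\<in>KD1\<^sup>*" using fAC[of 2] by simp
  have fAX: "\<And>b. 2 \<le> b \<Longrightarrow> ddist KD1 A X \<le> b \<and> (A,X)\<in>KD1\<^sup>*" by (rule pw2[where m=B]) (simp_all add: KD1_def)
  have rAX: "(A,X)\<in>KD1\<^sup>*" using fAX[of 2] by simp
  have fBA: "\<And>b. 2 \<le> b \<Longrightarrow> ddist KD1 B A \<le> b \<and> (B,A)\<in>KD1\<^sup>*" by (rule pw2[where m=C]) (simp_all add: KD1_def)
  have rBA: "(B,A)\<in>KD1\<^sup>*" using fBA[of 2] by simp
  have fBB: "\<And>b. 0 \<le> b \<Longrightarrow> ddist KD1 B B \<le> b \<and> (B,B)\<in>KD1\<^sup>*" by (rule pw0)
  have rBB: "(B,B)\<in>KD1\<^sup>*" using fBB[of 0] by simp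
  have fBC: "\<And>b. 1 \<le> b \<Longrightarrow> ddist KD1 B C \<le> b \<and> (B,C)\<in>KD1\<^sup>*" by (rule pw1) (simp_all add: KD1_def)
  have rBC: "(B,C)\<in>KD1\<^sup>*" using fBC[of 1] by simp
  have fBX: "\<And>b. 1 \<le> b \<Longrightarrow> ddist KD1 B X \<le> b \<and> (B,X)\<in>KD1\<^sup>*" by (rule pw1) (simp_all add: KD1_def)
  have rBX: "(B,X)\<in>KD1\<^sup>*" using fBX[of 1] by simp
  have fCA: "\<And>b. 1 \<le> b \<Longrightarrow> ddist KD1 C A \<le> b \<and> (C,A)\<in>KD1\<^sup>*" by (rule pw1) (simp_all add: KD1_def)
  have rCA: "(C,A)\<in>KD1\<^sup>*" using fCA[of 1] by simp
  have fCB: "\<And>b. 2 \<le> b \<Longrightarrow> ddist KD1 C B \<le> b \<and> (C,B)\<in>KD1\<^sup>*" by (rule pw2[where m=A]) (simp_all add: KD1_def)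
  have rCB: "(C,B)\<in>KD1\<^sup>*" using fCB[of 2] by simp
  have fCC: "\<And>b. 0 \<le> b \<Longrightarrow> ddist KD1 C C \<le> b \<and> (C,C)\<in>KD1\<^sup>*" by (rule pw0)
  have rCC: "(C,C)\<in>KD1\<^sup>*" using fCC[of 0] by simp
  have fCX: "\<And>b. 3 \<le> b \<Longrightarrow> ddist KD1 C X \<le> b \<and> (C,X)\<in>KD1\<^sup>*" by (rule pw3[where ma=A and mb=B]) (simp_all add: KD1_def)
  have rCX: "(C,X)\<in>KD1\<^sup>*" using fCX[of 3] by simp
  have fXA: "\<And>b. 1 \<le> b \<Longrightarrow> ddist KD1 X A \<le> b \<and> (X,A)\<in>KD1\<^sup>*" by (rule pw1) (simp_all add: KD1_def)
  have rXA: "(X,A)\<in>KD1\<^sup>*" using fXA[of 1] by simp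
  have fXB: "\<And>b. 2 \<le> b \<Longrightarrow> ddist KD1 X B \<le> b \<and> (X,B)\<in>KD1\<^sup>*" by (rule pw2[where m=A]) (simp_all add: KD1_def)
  have rXB: "(X,B)\<in>KD1\<^sup>*" using fXB[of 2] by simp
  have fXC: "\<And>b. 1 \<le> b \<Longrightarrow> ddist KD1 X C \<le> b \<and> (X,C)\<in>KD1\<^sup>*" by (rule pw1) (simp_all add: KD1_def)
  have rXC: "(X,C)\<in>KD1\<^sup>*" using fXC[of 1] by simp
  have fXX: "\<And>b. 0 \<le> b \<Longrightarrow> ddist KD1 X X \<le> b \<and> (X,X)\<in>KD1\<^sup>*" by (rule pw0)
  have rXX: "(X,X)\<in>KD1\<^sup>*" using fXX[of 0] by simp
  have s: "strongly_connected K4_V KD1" by (simp add: strongly_connected_def K4_V_def rAA rAB rAC rAX rBA rBB rBC rBX rCA rCB rCC rCX rXA rXB rXC rXX)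
  have "ddiam K4_V KD1 \<le> 3" by (rule ddiam_le) (simp_all add: K4_V_def fAA fAB fAC fAX fBA fBB fBC fBX fCA fCB fCC fCX fXA fXB fXC fXX)
  moreover have "3 \<le> ddiam K4_V KD1" using k4_low o s by simp
  moreover have "\<forall>v\<in>{A}. \<forall>u\<in>K4_V. ddist KD1 u v \<le> 2 \<and> ddist KD1 v u \<le> 2" by (simp add: K4_V_def fAA fAB fAC fAX fBA fBB fBC fBX fCA fCB fCC fCX fXA fXB fXC fXX)
  ultimately show ?thesis using o s by simp
qed

definition KD2 :: "(vtx\<times>vtx) set" where "KD2 = {(A,B), (B,C), (C,A), (X,A), (X,B), (C,X)}"
lemma KD2_props: "is_orientation K4_E KD2 \<and> strongly_connected K4_V KD2 \<and> ddiam K4_V KD2 = 3 \<and> (\<forall>v\<in>{B,C}. \<forall>u\<in>K4_V. ddist KD2 u v \<le> 2 \<and> ddist KD2 v u \<le> 2)"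
proof -
  have o: "is_orientation K4_E KD2" unfolding is_orientation_def KD2_def K4_E_def all_vtx by (simp add: doubleton_eq_iff)
  have fAA: "\<And>b. 0 \<le> b \<Longrightarrow> ddist KD2 A A \<le> b \<and> (A,A)\<in>KD2\<^sup>*" by (rule pw0)
  have rAA: "(A,A)\<in>KD2\<^sup>*" using fAA[of 0] by simp
  have fAB: "\<And>b. 1 \<le> b \<Longrightarrow> ddist KD2 A B \<le> b \<and> (A,B)\<in>KD2\<^sup>*" by (rule pw1) (simp_all add: KD2_def)
  have rAB: "(A,B)\<in>KD2\<^sup>*" using fAB[of 1] by simp
  have fAC: "\<And>b. 2 \<le> b \<Longrightarrow> ddist KD2 A C \<le> b \<and> (A,C)\<in>KD2\<^sup>*" by (rule pw2[where m=B]) (simp_all add: KD2_def)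
  have rAC: "(A,C)\<in>KD2\<^sup>*" using fAC[of 2] by simp
  have fAX: "\<And>b. 3 \<le> b \<Longrightarrow> ddist KD2 A X \<le> b \<and> (A,X)\<in>KD2\<^sup>*" by (rule pw3[where ma=B and mb=C]) (simp_all add: KD2_def)
  have rAX: "(A,X)\<in>KD2\<^sup>*" using fAX[of 3] by simp
  have fBA: "\<And>b. 2 \<le> b \<Longrightarrow> ddist KD2 B A \<le> b \<and> (B,A)\<in>KD2\<^sup>*" by (rule pw2[where m=C]) (simp_all add: KD2_def)
  have rBA: "(B,A)\<in>KD2\<^sup>*" using fBA[of 2] by simp
  have fBB: "\<And>b. 0 \<le> b \<Longrightarrow> ddist KD2 B B \<le> b \<and> (B,B)\<in>KD2\<^sup>*" by (rule pw0)
  have rBB: "(B,B)\<in>KD2\<^sup>*" using fBB[of 0] by simp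
  have fBC: "\<And>b. 1 \<le> b \<Longrightarrow> ddist KD2 B C \<le> b \<and> (B,C)\<in>KD2\<^sup>*" by (rule pw1) (simp_all add: KD2_def)
  have rBC: "(B,C)\<in>KD2\<^sup>*" using fBC[of 1] by simp
  have fBX: "\<And>b. 2 \<le> b \<Longrightarrow> ddist KD2 B X \<le> b \<and> (B,X)\<in>KD2\<^sup>*" by (rule pw2[where m=C]) (simp_all add: KD2_def)
  have rBX: "(B,X)\<in>KD2\<^sup>*" using fBX[of 2] by simp
  have fCA: "\<And>b. 1 \<le> b \<Longrightarrow> ddist KD2 C A \<le> b \<and> (C,A)\<in>KD2\<^sup>*" by (rule pw1) (simp_all add: KD2_def)
  have rCA: "(C,A)\<in>KD2\<^sup>*" using fCA[of 1] by simp
  have fCB: "\<And>b. 2 \<le> b \<Longrightarrow> ddist KD2 C B \<le> b \<and> (C,B)\<in>KD2\<^sup>*" by (rule pw2[where m=A]) (simp_all add: KD2_def)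
  have rCB: "(C,B)\<in>KD2\<^sup>*" using fCB[of 2] by simp
  have fCC: "\<And>b. 0 \<le> b \<Longrightarrow> ddist KD2 C C \<le> b \<and> (C,C)\<in>KD2\<^sup>*" by (rule pw0)
  have rCC: "(C,C)\<in>KD2\<^sup>*" using fCC[of 0] by simp
  have fCX: "\<And>b. 1 \<le> b \<Longrightarrow> ddist KD2 C X \<le> b \<and> (C,X)\<in>KD2\<^sup>*" by (rule pw1) (simp_all add: KD2_def)
  have rCX: "(C,X)\<in>KD2\<^sup>*" using fCX[of 1] by simp
  have fXA: "\<And>b. 1 \<le> b \<Longrightarrow> ddist KD2 X A \<le> b \<and> (X,A)\<in>KD2\<^sup>*" by (rule pw1) (simp_all add: KD2_def)
  have rXA: "(X,A)\<in>KD2\<^sup>*" using fXA[of 1] by simp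
  have fXB: "\<And>b. 1 \<le> b \<Longrightarrow> ddist KD2 X B \<le> b \<and> (X,B)\<in>KD2\<^sup>*" by (rule pw1) (simp_all add: KD2_def)
  have rXB: "(X,B)\<in>KD2\<^sup>*" using fXB[of 1] by simp
  have fXC: "\<And>b. 2 \<le> b \<Longrightarrow> ddist KD2 X C \<le> b \<and> (X,C)\<in>KD2\<^sup>*" by (rule pw2[where m=B]) (simp_all add: KD2_def)
  have rXC: "(X,C)\<in>KD2\<^sup>*" using fXC[of 2] by simp
  have fXX: "\<And>b. 0 \<le> b \<Longrightarrow> ddist KD2 X X \<le> b \<and> (X,X)\<in>KD2\<^sup>*" by (rule pw0)
  have rXX: "(X,X)\<in>KD2\<^sup>*" using fXX[of 0] by simp
  have s: "strongly_connected K4_V KD2" by (simp add: strongly_connected_def K4_V_def rAA rAB rAC rAX rBA rBB rBC rBX rCA rCB rCC rCX rXA rXB rXC rXX)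
  have "ddiam K4_V KD2 \<le> 3" by (rule ddiam_le) (simp_all add: K4_V_def fAA fAB fAC fAX fBA fBB fBC fBX fCA fCB fCC fCX fXA fXB fXC fXX)
  moreover have "3 \<le> ddiam K4_V KD2" using k4_low o s by simp
  moreover have "\<forall>v\<in>{B,C}. \<forall>u\<in>K4_V. ddist KD2 u v \<le> 2 \<and> ddist KD2 v u \<le> 2" by (simp add: K4_V_def fAA fAB fAC fAX fBA fBB fBC fBX fCA fCB fCC fCX fXA fXB fXC fXX)
  ultimately show ?thesis using o s by simp
qed

definition GD1 :: "(vtx\<times>vtx) set" where "GD1 = {(A,B), (B,C), (C,A), (X,A), (X,B), (C,X), (B,Y), (Y,C), (Y,Z), (Z,B)}"
lemma GD1_props: "is_orientation G63_E GD1 \<and> strongly_connected G63_V GD1 \<and> ddiam G63_V GD1 = 4 \<and> (\<forall>v\<in>{A,Y}. \<forall>u\<in>G63_V. ddist GD1 u v \<le> 3 \<and> ddist GD1 v u \<le> 3)"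
proof -
  have o: "is_orientation G63_E GD1" unfolding is_orientation_def GD1_def G63_E_def all_vtx by (simp add: doubleton_eq_iff)
  have fAA: "\<And>b. 0 \<le> b \<Longrightarrow> ddist GD1 A A \<le> b \<and> (A,A)\<in>GD1\<^sup>*" by (rule pw0)
  have rAA: "(A,A)\<in>GD1\<^sup>*" using fAA[of 0] by simp
  have fAB: "\<And>b. 1 \<le> b \<Longrightarrow> ddist GD1 A B \<le> b \<and> (A,B)\<in>GD1\<^sup>*" by (rule pw1) (simp_all add: GD1_def)
  have rAB: "(A,B)\<in>GD1\<^sup>*" using fAB[of 1] by simp
  have fAC: "\<And>b. 2 \<le> b \<Longrightarrow> ddist GD1 A C \<le> b \<and> (A,C)\<in>GD1\<^sup>*" by (rule pw2[where m=B]) (simp_all add: GD1_def)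
  have rAC: "(A,C)\<in>GD1\<^sup>*" using fAC[of 2] by simp
  have fAX: "\<And>b. 3 \<le> b \<Longrightarrow> ddist GD1 A X \<le> b \<and> (A,X)\<in>GD1\<^sup>*" by (rule pw3[where ma=B and mb=C]) (simp_all add: GD1_def)
  have rAX: "(A,X)\<in>GD1\<^sup>*" using fAX[of 3] by simp
  have fAY: "\<And>b. 2 \<le> b \<Longrightarrow> ddist GD1 A Y \<le> b \<and> (A,Y)\<in>GD1\<^sup>*" by (rule pw2[where m=B]) (simp_all add: GD1_def)
  have rAY: "(A,Y)\<in>GD1\<^sup>*" using fAY[of 2] by simp
  have fAZ: "\<And>b. 3 \<le> b \<Longrightarrow> ddist GD1 A Z \<le> b \<and> (A,Z)\<in>GD1\<^sup>*" by (rule pw3[where ma=B and mb=Y]) (simp_all add: GD1_def)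
  have rAZ: "(A,Z)\<in>GD1\<^sup>*" using fAZ[of 3] by simp
  have fBA: "\<And>b. 2 \<le> b \<Longrightarrow> ddist GD1 B A \<le> b \<and> (B,A)\<in>GD1\<^sup>*" by (rule pw2[where m=C]) (simp_all add: GD1_def)
  have rBA: "(B,A)\<in>GD1\<^sup>*" using fBA[of 2] by simp
  have fBB: "\<And>b. 0 \<le> b \<Longrightarrow> ddist GD1 B B \<le> b \<and> (B,B)\<in>GD1\<^sup>*" by (rule pw0)
  have rBB: "(B,B)\<in>GD1\<^sup>*" using fBB[of 0] by simp
  have fBC: "\<And>b. 1 \<le> b \<Longrightarrow> ddist GD1 B C \<le> b \<and> (B,C)\<in>GD1\<^sup>*" by (rule pw1) (simp_all add: GD1_def)
  have rBC: "(B,C)\<in>GD1\<^sup>*" using fBC[of 1] by simp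
  have fBX: "\<And>b. 2 \<le> b \<Longrightarrow> ddist GD1 B X \<le> b \<and> (B,X)\<in>GD1\<^sup>*" by (rule pw2[where m=C]) (simp_all add: GD1_def)
  have rBX: "(B,X)\<in>GD1\<^sup>*" using fBX[of 2] by simp
  have fBY: "\<And>b. 1 \<le> b \<Longrightarrow> ddist GD1 B Y \<le> b \<and> (B,Y)\<in>GD1\<^sup>*" by (rule pw1) (simp_all add: GD1_def)
  have rBY: "(B,Y)\<in>GD1\<^sup>*" using fBY[of 1] by simp
  have fBZ: "\<And>b. 2 \<le> b \<Longrightarrow> ddist GD1 B Z \<le> b \<and> (B,Z)\<in>GD1\<^sup>*" by (rule pw2[where m=Y]) (simp_all add: GD1_def)
  have rBZ: "(B,Z)\<in>GD1\<^sup>*" using fBZ[of 2] by simp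
  have fCA: "\<And>b. 1 \<le> b \<Longrightarrow> ddist GD1 C A \<le> b \<and> (C,A)\<in>GD1\<^sup>*" by (rule pw1) (simp_all add: GD1_def)
  have rCA: "(C,A)\<in>GD1\<^sup>*" using fCA[of 1] by simp
  have fCB: "\<And>b. 2 \<le> b \<Longrightarrow> ddist GD1 C B \<le> b \<and> (C,B)\<in>GD1\<^sup>*" by (rule pw2[where m=A]) (simp_all add: GD1_def)
  have rCB: "(C,B)\<in>GD1\<^sup>*" using fCB[of 2] by simp
  have fCC: "\<And>b. 0 \<le> b \<Longrightarrow> ddist GD1 C C \<le> b \<and> (C,C)\<in>GD1\<^sup>*" by (rule pw0)
  have rCC: "(C,C)\<in>GD1\<^sup>*" using fCC[of 0] by simp
  have fCX: "\<And>b. 1 \<le> b \<Longrightarrow> ddist GD1 C X \<le> b \<and> (C,X)\<in>GD1\<^sup>*" by (rule pw1) (simp_all add: GD1_def)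
  have rCX: "(C,X)\<in>GD1\<^sup>*" using fCX[of 1] by simp
  have fCY: "\<And>b. 3 \<le> b \<Longrightarrow> ddist GD1 C Y \<le> b \<and> (C,Y)\<in>GD1\<^sup>*" by (rule pw3[where ma=A and mb=B]) (simp_all add: GD1_def)
  have rCY: "(C,Y)\<in>GD1\<^sup>*" using fCY[of 3] by simp
  have fCZ: "\<And>b. 4 \<le> b \<Longrightarrow> ddist GD1 C Z \<le> b \<and> (C,Z)\<in>GD1\<^sup>*" by (rule pw4[where ma=A and mb=B and mc=Y]) (simp_all add: GD1_def)
  have rCZ: "(C,Z)\<in>GD1\<^sup>*" using fCZ[of 4] by simp
  have fXA: "\<And>b. 1 \<le> b \<Longrightarrow> ddist GD1 X A \<le> b \<and> (X,A)\<in>GD1\<^sup>*" by (rule pw1) (simp_all add: GD1_def)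
  have rXA: "(X,A)\<in>GD1\<^sup>*" using fXA[of 1] by simp
  have fXB: "\<And>b. 1 \<le> b \<Longrightarrow> ddist GD1 X B \<le> b \<and> (X,B)\<in>GD1\<^sup>*" by (rule pw1) (simp_all add: GD1_def)
  have rXB: "(X,B)\<in>GD1\<^sup>*" using fXB[of 1] by simp
  have fXC: "\<And>b. 2 \<le> b \<Longrightarrow> ddist GD1 X C \<le> b \<and> (X,C)\<in>GD1\<^sup>*" by (rule pw2[where m=B]) (simp_all add: GD1_def)
  have rXC: "(X,C)\<in>GD1\<^sup>*" using fXC[of 2] by simp
  have fXX: "\<And>b. 0 \<le> b \<Longrightarrow> ddist GD1 X X \<le> b \<and> (X,X)\<in>GD1\<^sup>*" by (rule pw0)
  have rXX: "(X,X)\<in>GD1\<^sup>*" using fXX[of 0] by simp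
  have fXY: "\<And>b. 2 \<le> b \<Longrightarrow> ddist GD1 X Y \<le> b \<and> (X,Y)\<in>GD1\<^sup>*" by (rule pw2[where m=B]) (simp_all add: GD1_def)
  have rXY: "(X,Y)\<in>GD1\<^sup>*" using fXY[of 2] by simp
  have fXZ: "\<And>b. 3 \<le> b \<Longrightarrow> ddist GD1 X Z \<le> b \<and> (X,Z)\<in>GD1\<^sup>*" by (rule pw3[where ma=B and mb=Y]) (simp_all add: GD1_def)
  have rXZ: "(X,Z)\<in>GD1\<^sup>*" using fXZ[of 3] by simp
  have fYA: "\<And>b. 2 \<le> b \<Longrightarrow> ddist GD1 Y A \<le> b \<and> (Y,A)\<in>GD1\<^sup>*" by (rule pw2[where m=C]) (simp_all add: GD1_def)
  have rYA: "(Y,A)\<in>GD1\<^sup>*" using fYA[of 2] by simp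
  have fYB: "\<And>b. 2 \<le> b \<Longrightarrow> ddist GD1 Y B \<le> b \<and> (Y,B)\<in>GD1\<^sup>*" by (rule pw2[where m=Z]) (simp_all add: GD1_def)
  have rYB: "(Y,B)\<in>GD1\<^sup>*" using fYB[of 2] by simp
  have fYC: "\<And>b. 1 \<le> b \<Longrightarrow> ddist GD1 Y C \<le> b \<and> (Y,C)\<in>GD1\<^sup>*" by (rule pw1) (simp_all add: GD1_def)
  have rYC: "(Y,C)\<in>GD1\<^sup>*" using fYC[of 1] by simp
  have fYX: "\<And>b. 2 \<le> b \<Longrightarrow> ddist GD1 Y X \<le> b \<and> (Y,X)\<in>GD1\<^sup>*" by (rule pw2[where m=C]) (simp_all add: GD1_def)
  have rYX: "(Y,X)\<in>GD1\<^sup>*" using fYX[of 2] by simp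
  have fYY: "\<And>b. 0 \<le> b \<Longrightarrow> ddist GD1 Y Y \<le> b \<and> (Y,Y)\<in>GD1\<^sup>*" by (rule pw0)
  have rYY: "(Y,Y)\<in>GD1\<^sup>*" using fYY[of 0] by simp
  have fYZ: "\<And>b. 1 \<le> b \<Longrightarrow> ddist GD1 Y Z \<le> b \<and> (Y,Z)\<in>GD1\<^sup>*" by (rule pw1) (simp_all add: GD1_def)
  have rYZ: "(Y,Z)\<in>GD1\<^sup>*" using fYZ[of 1] by simp
  have fZA: "\<And>b. 3 \<le> b \<Longrightarrow> ddist GD1 Z A \<le> b \<and> (Z,A)\<in>GD1\<^sup>*" by (rule pw3[where ma=B and mb=C]) (simp_all add: GD1_def)
  have rZA: "(Z,A)\<in>GD1\<^sup>*" using fZA[of 3] by simp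
  have fZB: "\<And>b. 1 \<le> b \<Longrightarrow> ddist GD1 Z B \<le> b \<and> (Z,B)\<in>GD1\<^sup>*" by (rule pw1) (simp_all add: GD1_def)
  have rZB: "(Z,B)\<in>GD1\<^sup>*" using fZB[of 1] by simp
  have fZC: "\<And>b. 2 \<le> b \<Longrightarrow> ddist GD1 Z C \<le> b \<and> (Z,C)\<in>GD1\<^sup>*" by (rule pw2[where m=B]) (simp_all add: GD1_def)
  have rZC: "(Z,C)\<in>GD1\<^sup>*" using fZC[of 2] by simp
  have fZX: "\<And>b. 3 \<le> b \<Longrightarrow> ddist GD1 Z X \<le> b \<and> (Z,X)\<in>GD1\<^sup>*" by (rule pw3[where ma=B and mb=C]) (simp_all add: GD1_def)
  have rZX: "(Z,X)\<in>GD1\<^sup>*" using fZX[of 3] by simp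
  have fZY: "\<And>b. 2 \<le> b \<Longrightarrow> ddist GD1 Z Y \<le> b \<and> (Z,Y)\<in>GD1\<^sup>*" by (rule pw2[where m=B]) (simp_all add: GD1_def)
  have rZY: "(Z,Y)\<in>GD1\<^sup>*" using fZY[of 2] by simp
  have fZZ: "\<And>b. 0 \<le> b \<Longrightarrow> ddist GD1 Z Z \<le> b \<and> (Z,Z)\<in>GD1\<^sup>*" by (rule pw0)
  have rZZ: "(Z,Z)\<in>GD1\<^sup>*" using fZZ[of 0] by simp
  have s: "strongly_connected G63_V GD1" by (simp add: strongly_connected_def G63_V_def rAA rAB rAC rAX rAY rAZ rBA rBB rBC rBX rBY rBZ rCA rCB rCC rCX rCY rCZ rXA rXB rXC rXX rXY rXZ rYA rYB rYC rYX rYY rYZ rZA rZB rZC rZX rZY rZZ)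
  have "ddiam G63_V GD1 \<le> 4" by (rule ddiam_le) (simp_all add: G63_V_def fAA fAB fAC fAX fAY fAZ fBA fBB fBC fBX fBY fBZ fCA fCB fCC fCX fCY fCZ fXA fXB fXC fXX fXY fXZ fYA fYB fYC fYX fYY fYZ fZA fZB fZC fZX fZY fZZ)
  moreover have "4 \<le> ddiam G63_V GD1" using g63_low o s by simp
  moreover have "\<forall>v\<in>{A,Y}. \<forall>u\<in>G63_V. ddist GD1 u v \<le> 3 \<and> ddist GD1 v u \<le> 3" by (simp add: G63_V_def fAA fAB fAC fAX fAY fAZ fBA fBB fBC fBX fBY fBZ fCA fCB fCC fCX fCY fCZ fXA fXB fXC fXX fXY fXZ fYA fYB fYC fYX fYY fYZ fZA fZB fZC fZX fZY fZZ)
  ultimately show ?thesis using o s by simp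
qed

definition GD2 :: "(vtx\<times>vtx) set" where "GD2 = {(A,B), (B,C), (C,A), (X,A), (X,B), (C,X), (B,Y), (C,Y), (Y,Z), (Z,B)}"
lemma GD2_props: "is_orientation G63_E GD2 \<and> strongly_connected G63_V GD2 \<and> ddiam G63_V GD2 = 4 \<and> (\<forall>v\<in>{B,C,Z}. \<forall>u\<in>G63_V. ddist GD2 u v \<le> 3 \<and> ddist GD2 v u \<le> 3)"
proof -
  have o: "is_orientation G63_E GD2" unfolding is_orientation_def GD2_def G63_E_def all_vtx by (simp add: doubleton_eq_iff)
  have fAA: "\<And>b. 0 \<le> b \<Longrightarrow> ddist GD2 A A \<le> b \<and> (A,A)\<in>GD2\<^sup>*" by (rule pw0)
  have rAA: "(A,A)\<in>GD2\<^sup>*" using fAA[of 0] by simp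
  have fAB: "\<And>b. 1 \<le> b \<Longrightarrow> ddist GD2 A B \<le> b \<and> (A,B)\<in>GD2\<^sup>*" by (rule pw1) (simp_all add: GD2_def)
  have rAB: "(A,B)\<in>GD2\<^sup>*" using fAB[of 1] by simp
  have fAC: "\<And>b. 2 \<le> b \<Longrightarrow> ddist GD2 A C \<le> b \<and> (A,C)\<in>GD2\<^sup>*" by (rule pw2[where m=B]) (simp_all add: GD2_def)
  have rAC: "(A,C)\<in>GD2\<^sup>*" using fAC[of 2] by simp
  have fAX: "\<And>b. 3 \<le> b \<Longrightarrow> ddist GD2 A X \<le> b \<and> (A,X)\<in>GD2\<^sup>*" by (rule pw3[where ma=B and mb=C]) (simp_all add: GD2_def)
  have rAX: "(A,X)\<in>GD2\<^sup>*" using fAX[of 3] by simp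
  have fAY: "\<And>b. 2 \<le> b \<Longrightarrow> ddist GD2 A Y \<le> b \<and> (A,Y)\<in>GD2\<^sup>*" by (rule pw2[where m=B]) (simp_all add: GD2_def)
  have rAY: "(A,Y)\<in>GD2\<^sup>*" using fAY[of 2] by simp
  have fAZ: "\<And>b. 3 \<le> b \<Longrightarrow> ddist GD2 A Z \<le> b \<and> (A,Z)\<in>GD2\<^sup>*" by (rule pw3[where ma=B and mb=Y]) (simp_all add: GD2_def)
  have rAZ: "(A,Z)\<in>GD2\<^sup>*" using fAZ[of 3] by simp
  have fBA: "\<And>b. 2 \<le> b \<Longrightarrow> ddist GD2 B A \<le> b \<and> (B,A)\<in>GD2\<^sup>*" by (rule pw2[where m=C]) (simp_all add: GD2_def)
  have rBA: "(B,A)\<in>GD2\<^sup>*" using fBA[of 2] by simp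
  have fBB: "\<And>b. 0 \<le> b \<Longrightarrow> ddist GD2 B B \<le> b \<and> (B,B)\<in>GD2\<^sup>*" by (rule pw0)
  have rBB: "(B,B)\<in>GD2\<^sup>*" using fBB[of 0] by simp
  have fBC: "\<And>b. 1 \<le> b \<Longrightarrow> ddist GD2 B C \<le> b \<and> (B,C)\<in>GD2\<^sup>*" by (rule pw1) (simp_all add: GD2_def)
  have rBC: "(B,C)\<in>GD2\<^sup>*" using fBC[of 1] by simp
  have fBX: "\<And>b. 2 \<le> b \<Longrightarrow> ddist GD2 B X \<le> b \<and> (B,X)\<in>GD2\<^sup>*" by (rule pw2[where m=C]) (simp_all add: GD2_def)
  have rBX: "(B,X)\<in>GD2\<^sup>*" using fBX[of 2] by simp
  have fBY: "\<And>b. 1 \<le> b \<Longrightarrow> ddist GD2 B Y \<le> b \<and> (B,Y)\<in>GD2\<^sup>*" by (rule pw1) (simp_all add: GD2_def)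
  have rBY: "(B,Y)\<in>GD2\<^sup>*" using fBY[of 1] by simp
  have fBZ: "\<And>b. 2 \<le> b \<Longrightarrow> ddist GD2 B Z \<le> b \<and> (B,Z)\<in>GD2\<^sup>*" by (rule pw2[where m=Y]) (simp_all add: GD2_def)
  have rBZ: "(B,Z)\<in>GD2\<^sup>*" using fBZ[of 2] by simp
  have fCA: "\<And>b. 1 \<le> b \<Longrightarrow> ddist GD2 C A \<le> b \<and> (C,A)\<in>GD2\<^sup>*" by (rule pw1) (simp_all add: GD2_def)
  have rCA: "(C,A)\<in>GD2\<^sup>*" using fCA[of 1] by simp
  have fCB: "\<And>b. 2 \<le> b \<Longrightarrow> ddist GD2 C B \<le> b \<and> (C,B)\<in>GD2\<^sup>*" by (rule pw2[where m=A]) (simp_all add: GD2_def)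
  have rCB: "(C,B)\<in>GD2\<^sup>*" using fCB[of 2] by simp
  have fCC: "\<And>b. 0 \<le> b \<Longrightarrow> ddist GD2 C C \<le> b \<and> (C,C)\<in>GD2\<^sup>*" by (rule pw0)
  have rCC: "(C,C)\<in>GD2\<^sup>*" using fCC[of 0] by simp
  have fCX: "\<And>b. 1 \<le> b \<Longrightarrow> ddist GD2 C X \<le> b \<and> (C,X)\<in>GD2\<^sup>*" by (rule pw1) (simp_all add: GD2_def)
  have rCX: "(C,X)\<in>GD2\<^sup>*" using fCX[of 1] by simp
  have fCY: "\<And>b. 1 \<le> b \<Longrightarrow> ddist GD2 C Y \<le> b \<and> (C,Y)\<in>GD2\<^sup>*" by (rule pw1) (simp_all add: GD2_def)
  have rCY: "(C,Y)\<in>GD2\<^sup>*" using fCY[of 1] by simp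
  have fCZ: "\<And>b. 2 \<le> b \<Longrightarrow> ddist GD2 C Z \<le> b \<and> (C,Z)\<in>GD2\<^sup>*" by (rule pw2[where m=Y]) (simp_all add: GD2_def)
  have rCZ: "(C,Z)\<in>GD2\<^sup>*" using fCZ[of 2] by simp
  have fXA: "\<And>b. 1 \<le> b \<Longrightarrow> ddist GD2 X A \<le> b \<and> (X,A)\<in>GD2\<^sup>*" by (rule pw1) (simp_all add: GD2_def)
  have rXA: "(X,A)\<in>GD2\<^sup>*" using fXA[of 1] by simp
  have fXB: "\<And>b. 1 \<le> b \<Longrightarrow> ddist GD2 X B \<le> b \<and> (X,B)\<in>GD2\<^sup>*" by (rule pw1) (simp_all add: GD2_def)
  have rXB: "(X,B)\<in>GD2\<^sup>*" using fXB[of 1] by simp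
  have fXC: "\<And>b. 2 \<le> b \<Longrightarrow> ddist GD2 X C \<le> b \<and> (X,C)\<in>GD2\<^sup>*" by (rule pw2[where m=B]) (simp_all add: GD2_def)
  have rXC: "(X,C)\<in>GD2\<^sup>*" using fXC[of 2] by simp
  have fXX: "\<And>b. 0 \<le> b \<Longrightarrow> ddist GD2 X X \<le> b \<and> (X,X)\<in>GD2\<^sup>*" by (rule pw0)
  have rXX: "(X,X)\<in>GD2\<^sup>*" using fXX[of 0] by simp
  have fXY: "\<And>b. 2 \<le> b \<Longrightarrow> ddist GD2 X Y \<le> b \<and> (X,Y)\<in>GD2\<^sup>*" by (rule pw2[where m=B]) (simp_all add: GD2_def)
  have rXY: "(X,Y)\<in>GD2\<^sup>*" using fXY[of 2] by simp
  have fXZ: "\<And>b. 3 \<le> b \<Longrightarrow> ddist GD2 X Z \<le> b \<and> (X,Z)\<in>GD2\<^sup>*" by (rule pw3[where ma=B and mb=Y]) (simp_all add: GD2_def)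
  have rXZ: "(X,Z)\<in>GD2\<^sup>*" using fXZ[of 3] by simp
  have fYA: "\<And>b. 4 \<le> b \<Longrightarrow> ddist GD2 Y A \<le> b \<and> (Y,A)\<in>GD2\<^sup>*" by (rule pw4[where ma=Z and mb=B and mc=C]) (simp_all add: GD2_def)
  have rYA: "(Y,A)\<in>GD2\<^sup>*" using fYA[of 4] by simp
  have fYB: "\<And>b. 2 \<le> b \<Longrightarrow> ddist GD2 Y B \<le> b \<and> (Y,B)\<in>GD2\<^sup>*" by (rule pw2[where m=Z]) (simp_all add: GD2_def)
  have rYB: "(Y,B)\<in>GD2\<^sup>*" using fYB[of 2] by simp
  have fYC: "\<And>b. 3 \<le> b \<Longrightarrow> ddist GD2 Y C \<le> b \<and> (Y,C)\<in>GD2\<^sup>*" by (rule pw3[where ma=Z and mb=B]) (simp_all add: GD2_def)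
  have rYC: "(Y,C)\<in>GD2\<^sup>*" using fYC[of 3] by simp
  have fYX: "\<And>b. 4 \<le> b \<Longrightarrow> ddist GD2 Y X \<le> b \<and> (Y,X)\<in>GD2\<^sup>*" by (rule pw4[where ma=Z and mb=B and mc=C]) (simp_all add: GD2_def)
  have rYX: "(Y,X)\<in>GD2\<^sup>*" using fYX[of 4] by simp
  have fYY: "\<And>b. 0 \<le> b \<Longrightarrow> ddist GD2 Y Y \<le> b \<and> (Y,Y)\<in>GD2\<^sup>*" by (rule pw0)
  have rYY: "(Y,Y)\<in>GD2\<^sup>*" using fYY[of 0] by simp
  have fYZ: "\<And>b. 1 \<le> b \<Longrightarrow> ddist GD2 Y Z \<le> b \<and> (Y,Z)\<in>GD2\<^sup>*" by (rule pw1) (simp_all add: GD2_def)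
  have rYZ: "(Y,Z)\<in>GD2\<^sup>*" using fYZ[of 1] by simp
  have fZA: "\<And>b. 3 \<le> b \<Longrightarrow> ddist GD2 Z A \<le> b \<and> (Z,A)\<in>GD2\<^sup>*" by (rule pw3[where ma=B and mb=C]) (simp_all add: GD2_def)
  have rZA: "(Z,A)\<in>GD2\<^sup>*" using fZA[of 3] by simp
  have fZB: "\<And>b. 1 \<le> b \<Longrightarrow> ddist GD2 Z B \<le> b \<and> (Z,B)\<in>GD2\<^sup>*" by (rule pw1) (simp_all add: GD2_def)
  have rZB: "(Z,B)\<in>GD2\<^sup>*" using fZB[of 1] by simp
  have fZC: "\<And>b. 2 \<le> b \<Longrightarrow> ddist GD2 Z C \<le> b \<and> (Z,C)\<in>GD2\<^sup>*" by (rule pw2[where m=B]) (simp_all add: GD2_def)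
  have rZC: "(Z,C)\<in>GD2\<^sup>*" using fZC[of 2] by simp
  have fZX: "\<And>b. 3 \<le> b \<Longrightarrow> ddist GD2 Z X \<le> b \<and> (Z,X)\<in>GD2\<^sup>*" by (rule pw3[where ma=B and mb=C]) (simp_all add: GD2_def)
  have rZX: "(Z,X)\<in>GD2\<^sup>*" using fZX[of 3] by simp
  have fZY: "\<And>b. 2 \<le> b \<Longrightarrow> ddist GD2 Z Y \<le> b \<and> (Z,Y)\<in>GD2\<^sup>*" by (rule pw2[where m=B]) (simp_all add: GD2_def)
  have rZY: "(Z,Y)\<in>GD2\<^sup>*" using fZY[of 2] by simp
  have fZZ: "\<And>b. 0 \<le> b \<Longrightarrow> ddist GD2 Z Z \<le> b \<and> (Z,Z)\<in>GD2\<^sup>*" by (rule pw0)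
  have rZZ: "(Z,Z)\<in>GD2\<^sup>*" using fZZ[of 0] by simp
  have s: "strongly_connected G63_V GD2" by (simp add: strongly_connected_def G63_V_def rAA rAB rAC rAX rAY rAZ rBA rBB rBC rBX rBY rBZ rCA rCB rCC rCX rCY rCZ rXA rXB rXC rXX rXY rXZ rYA rYB rYC rYX rYY rYZ rZA rZB rZC rZX rZY rZZ)
  have "ddiam G63_V GD2 \<le> 4" by (rule ddiam_le) (simp_all add: G63_V_def fAA fAB fAC fAX fAY fAZ fBA fBB fBC fBX fBY fBZ fCA fCB fCC fCX fCY fCZ fXA fXB fXC fXX fXY fXZ fYA fYB fYC fYX fYY fYZ fZA fZB fZC fZX fZY fZZ)
  moreover have "4 \<le> ddiam G63_V GD2" using g63_low o s by simp
  moreover have "\<forall>v\<in>{B,C,Z}. \<forall>u\<in>G63_V. ddist GD2 u v \<le> 3 \<and> ddist GD2 v u \<le> 3" by (simp add: G63_V_def fAA fAB fAC fAX fAY fAZ fBA fBB fBC fBX fBY fBZ fCA fCB fCC fCX fCY fCZ fXA fXB fXC fXX fXY fXZ fYA fYB fYC fYX fYY fYZ fZA fZB fZC fZX fZY fZZ)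
  ultimately show ?thesis using o s by simp
qed

lemma main_k4: assumes "v \<in> K4_outer"
  shows "\<exists>D. is_orientation K4_E D \<and> strongly_connected K4_V D \<and>
           real (ddiam K4_V D) = real (odiam K4_V K4_E) \<and>
           real (odiam K4_V K4_E) = real (card K4_V) / 2 + 1 \<and>
           (\<forall>u\<in>K4_V. real (max (ddist D u v) (ddist D v u)) \<le> real (card K4_V) / 2)"
proof -
  have od: "odiam K4_V K4_E = 3" using KD1_props k4_low by (intro odiam_eq[of _ KD1]) auto
  have c: "card K4_V = 4" by (simp add: K4_V_def)
  show ?thesis
  proof (cases "v = A")
    case True
    then show ?thesis using KD1_props od c by (intro exI[of _ KD1]) auto
  next
    case False
    then have "v \<in> {B,C}" using assms by (auto simp: K4_outer_def)
    then show ?thesis using KD2_props od c by (intro exI[of _ KD2]) auto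
  qed
qed

lemma main_g63: assumes "v \<in> G63_outer"
  shows "\<exists>D. is_orientation G63_E D \<and> strongly_connected G63_V D \<and>
           real (ddiam G63_V D) = real (odiam G63_V G63_E) \<and>
           real (odiam G63_V G63_E) = real (card G63_V) / 2 + 1 \<and>
           (\<forall>u\<in>G63_V. real (max (ddist D u v) (ddist D v u)) \<le> real (card G63_V) / 2)"
proof -
  have od: "odiam G63_V G63_E = 4" using GD1_props g63_low by (intro odiam_eq[of _ GD1]) auto
  have c: "card G63_V = 6" by (simp add: G63_V_def)
  show ?thesis
  proof (cases "v \<in> {A,Y}")
    case True
    then show ?thesis using GD1_props od c by (intro exI[of _ GD1]) auto
  next
    case False
    then have "v \<in> {B,C,Z}" using assms by (auto simp: G63_outer_def)
    then show ?thesis using GD2_props od c by (intro exI[of _ GD2]) auto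
  qed
qed

theorem lemma2p6:
  fixes V :: "vtx set" and E :: "vtx set set" and Cyc :: "vtx set" and v :: vtx
  assumes "(V, E, Cyc) \<in> {(K4_V, K4_E, K4_outer), (G63_V, G63_E, G63_outer)}"
    and "v \<in> Cyc"
    and "degree E v = 3"
    and "\<exists>w. w \<in> V - Cyc \<and> {v, w} \<in> E"
  shows "\<exists>D. is_orientation E D \<and> strongly_connected V D \<and>
           real (ddiam V D) = real (odiam V E) \<and>
           real (odiam V E) = real (card V) / 2 + 1 \<and>
           (\<forall>u\<in>V. real (max (ddist D u v) (ddist D v u)) \<le> real (card V) / 2)"
  using assms(1) main_k4[of v] main_g63[of v] assms(2) by auto

end
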